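(* Let $S=(P,L)$ be a $(2,t)$-generalized quadrangle and let $(R,\psi)$ be a representation of $S$. Then $R$ is an elementary abelian $2$-group.
   Context: A $(2,t)$-generalized quadrangle is a partial linear space (two distinct points on at most one line) in which every line has exactly $3$ points, every point lies on exactly $t+1$ lines, no point is collinear with all points, and for every point $x$ and line $\ell$ with $x\notin\ell$, $x$ is collinear with exactly one point of $\ell$. A representation $(R,\psi)$ of $S$ is a group $R$ together with a map $\psi$ assigning to each point $x$ a subgroup $\psi(x)=\langle r_x\rangle$ of order $2$, such that $R$ is generated by $\{r_x:x\in P\}$ and, for every line $\{x,y,z\}$, $\{1,r_x,r_y,r_z\}$ is a Klein four subgroup of $R$. *)

theory Defs
  imports "HOL-Algebra.Algebra"
begin

definition collinear_pts :: "'p set set \<Rightarrow> 'p \<Rightarrow> 'p \<Rightarrow> bool" where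
  "collinear_pts L x y \<longleftrightarrow> (\<exists>l\<in>L. x \<in> l \<and> y \<in> l)"

definition gen_quadrangle_2t :: "'p set \<Rightarrow> 'p set set \<Rightarrow> nat \<Rightarrow> bool" where
  "gen_quadrangle_2t P L t \<longleftrightarrow>
     (\<forall>l\<in>L. l \<subseteq> P \<and> card l = 3) \<and>
     (\<forall>x\<in>P. \<forall>y\<in>P. x \<noteq> y \<longrightarrow>
        (\<forall>l\<in>L. \<forall>m\<in>L. x \<in> l \<and> y \<in> l \<and> x \<in> m \<and> y \<in> m \<longrightarrow> l = m)) \<and>
     (\<forall>x\<in>P. finite {l\<in>L. x \<in> l} \<and> card {l\<in>L. x \<in> l} = t + 1) \<and>
     (\<forall>x\<in>P. \<exists>y\<in>P. \<not> collinear_pts L x y) \<and>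
     (\<forall>x\<in>P. \<forall>l\<in>L. x \<notin> l \<longrightarrow> (\<exists>!y. y \<in> l \<and> collinear_pts L x y))"

definition klein_four_subgroup :: "('g, 'b) monoid_scheme \<Rightarrow> 'g set \<Rightarrow> bool" where
  "klein_four_subgroup R H \<longleftrightarrow>
     subgroup H R \<and> card H = 4 \<and> (\<forall>h\<in>H. h \<otimes>\<^bsub>R\<^esub> h = \<one>\<^bsub>R\<^esub>)"

text \<open>A representation: r x generates psi(x) = <r x>, a subgroup of order 2.\<close>
definition representation :: "'p set \<Rightarrow> 'p set set \<Rightarrow> ('g, 'b) monoid_scheme \<Rightarrow> ('p \<Rightarrow> 'g) \<Rightarrow> bool" where
  "representation P L R r \<longleftrightarrow>
     group R \<and>
     (\<forall>x\<in>P. r x \<in> carrier R \<and> group.ord R (r x) = 2) \<and>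
     generate R (r ` P) = carrier R \<and>
     (\<forall>x y z. {x, y, z} \<in> L \<longrightarrow>
        klein_four_subgroup R {\<one>\<^bsub>R\<^esub>, r x, r y, r z})"

definition elementary_abelian_2_group :: "('g, 'b) monoid_scheme \<Rightarrow> bool" where
  "elementary_abelian_2_group R \<longleftrightarrow>
     comm_group R \<and> (\<forall>g\<in>carrier R. g \<otimes>\<^bsub>R\<^esub> g = \<one>\<^bsub>R\<^esub>)"

end

theory Submission
  imports Defs
begin

locale gq2t =
  fixes P :: "'p set" and L :: "'p set set" and t :: nat
  assumes gq: "gen_quadrangle_2t P L t"
begin

lemma D: "\<forall>l\<in>L. l \<subseteq> P \<and> card l = 3"
  "\<forall>x\<in>P. \<forall>y\<in>P. x \<noteq> y \<longrightarrow>
        (\<forall>l\<in>L. \<forall>m\<in>L. x \<in> l \<and> y \<in> l \<and> x \<in> m \<and> y \<in> m \<longrightarrow> l = m)"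
  "\<forall>x\<in>P. finite {l\<in>L. x \<in> l} \<and> card {l\<in>L. x \<in> l} = t + 1"
  "\<forall>x\<in>P. \<forall>l\<in>L. x \<notin> l \<longrightarrow> (\<exists>!y. y \<in> l \<and> collinear_pts L x y)"
  using gq unfolding gen_quadrangle_2t_def by simp_all

lemma col_sym: "collinear_pts L x y \<Longrightarrow> collinear_pts L y x"
  unfolding collinear_pts_def by blast

lemma col_I: "l \<in> L \<Longrightarrow> x \<in> l \<Longrightarrow> y \<in> l \<Longrightarrow> collinear_pts L x y"
  unfolding collinear_pts_def by blast

lemma col_E: "collinear_pts L x y \<Longrightarrow> \<exists>l\<in>L. x \<in> l \<and> y \<in> l"
  unfolding collinear_pts_def by blast

lemma line_P: "l \<in> L \<Longrightarrow> l \<subseteq> P"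
  using D(1) by blast

lemma line_card: "l \<in> L \<Longrightarrow> card l = 3"
  using D(1) by blast

lemma line_unique: "l \<in> L \<Longrightarrow> m \<in> L \<Longrightarrow> x \<noteq> y \<Longrightarrow> x \<in> l \<Longrightarrow> y \<in> l \<Longrightarrow> x \<in> m \<Longrightarrow> y \<in> m \<Longrightarrow> l = m"
  using D(2) line_P by blast

lemma ex1_pt: "p \<in> P \<Longrightarrow> l \<in> L \<Longrightarrow> p \<notin> l \<Longrightarrow> \<exists>!y. y \<in> l \<and> collinear_pts L p y"
proof -
  assume a: "p \<in> P" "l \<in> L" "p \<notin> l"
  have "\<forall>l\<in>L. p \<notin> l \<longrightarrow> (\<exists>!y. y \<in> l \<and> collinear_pts L p y)" using D(4) a(1) by (rule bspec)
  then have "p \<notin> l \<longrightarrow> (\<exists>!y. y \<in> l \<and> collinear_pts L p y)" using a(2) by (rule bspec)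
  then show ?thesis using a(3) by (rule mp)
qed

lemma notri: "p \<in> P \<Longrightarrow> l \<in> L \<Longrightarrow> p \<notin> l \<Longrightarrow> u \<in> l \<Longrightarrow> v \<in> l \<Longrightarrow> u \<noteq> v
   \<Longrightarrow> collinear_pts L p u \<Longrightarrow> collinear_pts L p v \<Longrightarrow> False"
proof -
  assume a: "p \<in> P" "l \<in> L" "p \<notin> l" "u \<in> l" "v \<in> l" "u \<noteq> v"
     "collinear_pts L p u" "collinear_pts L p v"
  have e: "\<exists>!y. y \<in> l \<and> collinear_pts L p y" using ex1_pt a(1-3) .
  have "u = v" using ex1E[OF e] a(4,5,7,8) by blast
  then show False using a(6) by contradiction
qed

lemma proj: "p \<in> P \<Longrightarrow> l \<in> L \<Longrightarrow> p \<notin> l \<Longrightarrow> \<exists>q\<in>l. collinear_pts L p q"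
  using ex1_pt by blast

lemma lines_fin: "x \<in> P \<Longrightarrow> finite {l\<in>L. x \<in> l} \<and> card {l\<in>L. x \<in> l} = t + 1"
  using D(3) by blast

lemma line_exists: "x \<in> P \<Longrightarrow> \<exists>l\<in>L. x \<in> l"
proof -
  assume "x \<in> P"
  then have "card {l\<in>L. x \<in> l} = t + 1" using lines_fin by blast
  then have "card {l\<in>L. x \<in> l} \<noteq> 0" by simp
  then have "{l\<in>L. x \<in> l} \<noteq> {}" by (metis card.empty)
  then show ?thesis by blast
qed

lemma third_pt:
  assumes "l \<in> L" "x \<in> l" "a \<in> l" "x \<noteq> a"
  shows "\<exists>b. l = {x, a, b} \<and> b \<noteq> x \<and> b \<noteq> a"
proof -
  have c: "card (l - {x, a}) = 1" using line_card[OF assms(1)] assms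
    by (simp add: card_Diff_subset)
  then obtain b where "l - {x, a} = {b}" by (meson card_1_singletonE)
  then show ?thesis using assms by blast
qed

lemma two_lines:
  assumes "l \<in> L" "x \<in> l" "a \<in> l" "m \<in> L" "a \<in> m" "l \<noteq> m"
  shows "\<exists>l'\<in>L. x \<in> l' \<and> l' \<noteq> l"
proof (rule ccontr)
  assume h: "\<not> ?thesis"
  have xP: "x \<in> P" "a \<in> P" using assms line_P by auto
  have "{l'\<in>L. x \<in> l'} = {l}" using h assms(1,2) by blast
  then have t0: "t + 1 = 1" using lines_fin[OF xP(1)] by simp
  have "{l, m} \<subseteq> {l'\<in>L. a \<in> l'}" using assms by blast
  then have "card {l, m} \<le> card {l'\<in>L. a \<in> l'}"
    using lines_fin[OF xP(2)] by (meson card_mono)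
  then have "card {l, m} \<le> 1" using lines_fin[OF xP(2)] t0 by linarith
  then show False using assms(6) by simp
qed

lemma grid:
  assumes xP: "x \<in> P" and yP: "y \<in> P" and nc: "\<not> collinear_pts L x y"
  shows "\<exists>a a' b b' e e' z. {x,a,b} \<in> L \<and> {x,a',b'} \<in> L \<and> {y,a,e} \<in> L \<and> {y,a',e'} \<in> L
     \<and> {b',e,z} \<in> L \<and> {b,e',z} \<in> L"
proof -
  obtain l where l: "l \<in> L" "x \<in> l" using line_exists xP by blast
  have yl: "y \<notin> l" using l nc col_I by blast
  obtain a where a: "a \<in> l" "collinear_pts L y a" using proj[OF yP l(1) yl] by blast
  have ax: "a \<noteq> x" using a nc col_sym by blast
  obtain b where b: "l = {x,a,b}" "b \<noteq> x" "b \<noteq> a" using third_pt[OF l(1) l(2) a(1) ax[symmetric]] by blast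
  obtain m where m: "m \<in> L" "y \<in> m" "a \<in> m" using col_E[OF a(2)] by blast
  have ya: "y \<noteq> a" using yl a by blast
  obtain e where e: "m = {y,a,e}" "e \<noteq> y" "e \<noteq> a" using third_pt[OF m(1) m(2) m(3) ya] by blast
  have lm: "l \<noteq> m" using yl m by blast
  obtain l' where l': "l' \<in> L" "x \<in> l'" "l' \<noteq> l" using two_lines[OF l(1) l(2) a(1) m(1) m(3) lm] by blast
  have yl': "y \<notin> l'" using l' nc col_I by blast
  obtain a' where a': "a' \<in> l'" "collinear_pts L y a'" using proj[OF yP l'(1) yl'] by blast
  have a'x: "a' \<noteq> x" using a' nc col_sym by blast
  obtain b' where b': "l' = {x,a',b'}" "b' \<noteq> x" "b' \<noteq> a'" using third_pt[OF l'(1) l'(2) a'(1) a'x[symmetric]] by blast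
  obtain m' where m': "m' \<in> L" "y \<in> m'" "a' \<in> m'" using col_E[OF a'(2)] by blast
  have ya': "y \<noteq> a'" using yl' a' by blast
  obtain e' where e': "m' = {y,a',e'}" "e' \<noteq> y" "e' \<noteq> a'" using third_pt[OF m'(1) m'(2) m'(3) ya'] by blast
  have lP: "l \<subseteq> P" "l' \<subseteq> P" "m \<subseteq> P" "m' \<subseteq> P" using line_P l(1) l'(1) m(1) m'(1) by auto
  have al': "a \<notin> l'" using line_unique[OF l(1) l'(1) ax[symmetric] l(2) a(1) l'(2)] l'(3) by blast
  have a'l: "a' \<notin> l" using line_unique[OF l(1) l'(1) a'x[symmetric] l(2) _ l'(2) a'(1)] l'(3) by blast
  have b'l: "b' \<notin> l" using line_unique[OF l(1) l'(1) b'(2)[symmetric] l(2) _ l'(2)] b'(1) l'(3) by blast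
  have bl': "b \<notin> l'" using line_unique[OF l(1) l'(1) b(2)[symmetric] l(2) _ l'(2)] b(1) l'(3) by blast
  have xa: "collinear_pts L x a" "collinear_pts L x b" "collinear_pts L a b"
    using col_I[OF l(1)] l(2) b(1) by auto
  have xa': "collinear_pts L x a'" "collinear_pts L x b'" "collinear_pts L a' b'"
    using col_I[OF l'(1)] l'(2) b'(1) by auto
  have ya2: "collinear_pts L y a" "collinear_pts L y e" "collinear_pts L a e"
    using col_I[OF m(1)] e(1) by auto
  have ya2': "collinear_pts L y a'" "collinear_pts L y e'" "collinear_pts L a' e'"
    using col_I[OF m'(1)] e'(1) by auto
  have mem: "b \<in> l" "b' \<in> l'" "e \<in> m" "e' \<in> m'" using b(1) b'(1) e(1) e'(1) by auto
  note bl = mem(1) and b'l' = mem(2) and em = mem(3)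
  have b'P: "b' \<in> P" using lP b'(1) by auto
  have bP: "b \<in> P" using lP b(1) by auto
  have eP: "e \<in> P" using lP e(1) by auto
  have e'P: "e' \<in> P" using lP e'(1) by auto
  have aP: "a \<in> P" "a' \<in> P" using lP a(1) a'(1) by auto
  have nb'y: "\<not> collinear_pts L b' y"
  proof
    assume H: "collinear_pts L b' y"
    show False by (rule notri[OF yP l'(1) yl' a'(1) b'l' b'(3)[symmetric] ya2'(1) col_sym[OF H]])
  qed
  have nb'a: "\<not> collinear_pts L b' a"
  proof
    assume H: "collinear_pts L b' a"
    show False by (rule notri[OF aP(1) l'(1) al' l'(2) b'l' b'(2)[symmetric] col_sym[OF xa(1)] col_sym[OF H]])
  qed
  have b'm: "b' \<notin> m" using nb'y col_I[OF m(1)] m(2) by blast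
  obtain q where q: "q \<in> m" "collinear_pts L b' q" using proj[OF b'P m(1) b'm] by blast
  have b'e: "collinear_pts L b' e" using q nb'y nb'a e(1) by auto
  have b'ne: "b' \<noteq> e" using b'm e(1) by auto
  obtain n where n: "n \<in> L" "b' \<in> n" "e \<in> n" using col_E[OF b'e] by blast
  obtain z where z: "n = {b',e,z}" "z \<noteq> b'" "z \<noteq> e" using third_pt[OF n(1) n(2) n(3) b'ne] by blast
  have zP: "z \<in> P" using line_P[OF n(1)] z(1) by auto
  have nby: "\<not> collinear_pts L b y"
  proof
    assume H: "collinear_pts L b y"
    show False by (rule notri[OF yP l(1) yl a(1) bl b(3)[symmetric] ya2(1) col_sym[OF H]])
  qed
  have nba': "\<not> collinear_pts L b a'"
  proof
    assume H: "collinear_pts L b a'"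
    show False by (rule notri[OF aP(2) l(1) a'l l(2) bl b(2)[symmetric] col_sym[OF xa'(1)] col_sym[OF H]])
  qed
  have bm': "b \<notin> m'" using nby col_I[OF m'(1)] m'(2) by blast
  obtain q2 where q2: "q2 \<in> m'" "collinear_pts L b q2" using proj[OF bP m'(1) bm'] by blast
  have be': "collinear_pts L b e'" using q2 nby nba' e'(1) by auto
  have bne': "b \<noteq> e'" using bm' e'(1) by auto
  obtain k where k: "k \<in> L" "b \<in> k" "e' \<in> k" using col_E[OF be'] by blast
  have nbb': "\<not> collinear_pts L b' b"
  proof
    assume H: "collinear_pts L b' b"
    show False by (rule notri[OF b'P l(1) b'l l(2) bl b(2)[symmetric] col_sym[OF xa'(2)] H])
  qed
  have el: "e \<notin> l" using line_unique[OF l(1) m(1) e(3) _ a(1) _ m(3)] e(1) lm by blast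
  have nbe: "\<not> collinear_pts L e b"
  proof
    assume H: "collinear_pts L e b"
    show False by (rule notri[OF eP l(1) el a(1) bl b(3)[symmetric] col_sym[OF ya2(3)] H])
  qed
  have bn: "b \<notin> n" using nbb' col_I[OF n(1)] n(2) col_sym by blast
  obtain q3 where q3: "q3 \<in> n" "collinear_pts L b q3" using proj[OF bP n(1) bn] by blast
  have bz: "collinear_pts L b z" using q3 nbb' nbe z(1) col_sym by auto
  have e'l': "e' \<notin> l'" using line_unique[OF l'(1) m'(1) e'(3) _ a'(1) _ m'(3)] e'(1) m'(2) yl' by blast
  have ne'b': "\<not> collinear_pts L e' b'"
  proof
    assume H: "collinear_pts L e' b'"
    show False by (rule notri[OF e'P l'(1) e'l' a'(1) b'l' b'(3)[symmetric] col_sym[OF ya2'(3)] H])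
  qed
  have a'm: "a' \<notin> m"
  proof
    assume "a' \<in> m"
    then have "collinear_pts L a' a" using col_I[OF m(1)] m(3) by blast
    then show False by (rule notri[OF aP(2) l(1) a'l l(2) a(1) ax[symmetric] col_sym[OF xa'(1)]])
  qed
  have e'm: "e' \<notin> m" using line_unique[OF m(1) m'(1) e'(2)[symmetric] m(2) _ m'(2)] e'(1) a'm m'(3) by blast
  have ne'e: "\<not> collinear_pts L e' e"
  proof
    assume H: "collinear_pts L e' e"
    show False by (rule notri[OF e'P m(1) e'm m(2) em e(2)[symmetric] col_sym[OF ya2'(2)] H])
  qed
  have e'n: "e' \<notin> n" using ne'b' col_I[OF n(1)] n(2) by blast
  obtain q4 where q4: "q4 \<in> n" "collinear_pts L e' q4" using proj[OF e'P n(1) e'n] by blast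
  have e'z: "collinear_pts L e' z" using q4 ne'b' ne'e z(1) by auto
  have zk: "z \<in> k"
  proof (rule ccontr)
    assume "z \<notin> k"
    then show False by (rule notri[OF zP k(1) _ k(2) k(3) bne' col_sym[OF bz] col_sym[OF e'z]])
  qed
  have zb: "z \<noteq> b" using bn z(1) by auto
  have ze': "z \<noteq> e'" using e'n z(1) by auto
  obtain w where w: "k = {b,e',w}" "w \<noteq> b" "w \<noteq> e'" using third_pt[OF k(1) k(2) k(3) bne'] by blast
  have "k = {b,e',z}" using w zk zb ze' by auto
  then show ?thesis using l(1) b(1) l'(1) b'(1) m(1) e(1) m'(1) e'(1) n(1) z(1) k(1) by blast
qed

end

lemma card4_distinct:
  assumes "card {a, b, c, d} = (4::nat)"
  shows "a \<noteq> b \<and> a \<noteq> c \<and> a \<noteq> d \<and> b \<noteq> c \<and> b \<noteq> d \<and> c \<noteq> d"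
  using assms by (auto simp: card_insert_if split: if_splits)

lemma card3_distinct:
  assumes "card {a, b, c} = (3::nat)"
  shows "a \<noteq> b \<and> a \<noteq> c \<and> b \<noteq> c"
  using assms by (auto simp: card_insert_if split: if_splits)

lemma klein_prod:
  fixes R :: "('g, 'b) monoid_scheme" (structure)
  assumes R: "group R" and K: "klein_four_subgroup R {\<one>\<^bsub>R\<^esub>, p, q, s}"
  shows "p \<otimes>\<^bsub>R\<^esub> q = s \<and> p \<in> carrier R \<and> q \<in> carrier R \<and> s \<in> carrier R
     \<and> p \<otimes>\<^bsub>R\<^esub> p = \<one>\<^bsub>R\<^esub>"
proof -
  interpret group R by (rule R)
  have sg: "subgroup {\<one>, p, q, s} R" and c4: "card {\<one>, p, q, s} = 4"
    and inv: "\<forall>h\<in>{\<one>, p, q, s}. h \<otimes> h = \<one>"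
    using K unfolding klein_four_subgroup_def by auto
  have car: "p \<in> carrier R" "q \<in> carrier R" "s \<in> carrier R"
    using subgroup.subset[OF sg] by auto
  have d: "\<one> \<noteq> p \<and> \<one> \<noteq> q \<and> \<one> \<noteq> s \<and> p \<noteq> q \<and> p \<noteq> s \<and> q \<noteq> s"
    using card4_distinct[OF c4] .
  have pp: "p \<otimes> p = \<one>" using inv by auto
  have mem: "p \<otimes> q \<in> {\<one>, p, q, s}" using subgroup.m_closed[OF sg] by auto
  have n1: "p \<otimes> q \<noteq> \<one>"
  proof
    assume "p \<otimes> q = \<one>"
    then have "p \<otimes> q = p \<otimes> p" using pp by simp
    then have "q = p" using car l_cancel by blast
    then show False using d by simp
  qed
  have n2: "p \<otimes> q \<noteq> p"
  proof
    assume "p \<otimes> q = p"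
    then have "p \<otimes> q = p \<otimes> \<one>" using car by simp
    then have "q = \<one>" using car l_cancel by blast
    then show False using d by simp
  qed
  have n3: "p \<otimes> q \<noteq> q"
  proof
    assume "p \<otimes> q = q"
    then have "p \<otimes> q = \<one> \<otimes> q" using car by simp
    then have "p = \<one>" using car r_cancel by blast
    then show False using d by simp
  qed
  show ?thesis using mem n1 n2 n3 car pp by auto
qed

lemma comm_key:
  fixes R :: "('g, 'b) monoid_scheme" (structure)
  assumes R: "group R"
    and c: "Xg \<in> carrier R" "Yg \<in> carrier R" "A \<in> carrier R" "A' \<in> carrier R"
    and h1: "Xg \<otimes>\<^bsub>R\<^esub> A = A \<otimes>\<^bsub>R\<^esub> Xg" and h2: "Xg \<otimes>\<^bsub>R\<^esub> A' = A' \<otimes>\<^bsub>R\<^esub> Xg"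
    and h3: "Yg \<otimes>\<^bsub>R\<^esub> A = A \<otimes>\<^bsub>R\<^esub> Yg" and h4: "Yg \<otimes>\<^bsub>R\<^esub> A' = A' \<otimes>\<^bsub>R\<^esub> Yg"
    and h5: "(Xg \<otimes>\<^bsub>R\<^esub> A') \<otimes>\<^bsub>R\<^esub> (A \<otimes>\<^bsub>R\<^esub> Yg) = (Xg \<otimes>\<^bsub>R\<^esub> A) \<otimes>\<^bsub>R\<^esub> (A' \<otimes>\<^bsub>R\<^esub> Yg)"
    and h6: "(Xg \<otimes>\<^bsub>R\<^esub> A) \<otimes>\<^bsub>R\<^esub> (A' \<otimes>\<^bsub>R\<^esub> Yg) = (A' \<otimes>\<^bsub>R\<^esub> Yg) \<otimes>\<^bsub>R\<^esub> (Xg \<otimes>\<^bsub>R\<^esub> A)"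
  shows "Xg \<otimes>\<^bsub>R\<^esub> Yg = Yg \<otimes>\<^bsub>R\<^esub> Xg"
proof -
  interpret group R by (rule R)
  have "Xg \<otimes> (A' \<otimes> A \<otimes> Yg) = Xg \<otimes> (A \<otimes> A' \<otimes> Yg)" using h5 c by (simp add: m_assoc)
  then have "A' \<otimes> A \<otimes> Yg = A \<otimes> A' \<otimes> Yg" using c l_cancel by (meson m_closed)
  then have aa: "A' \<otimes> A = A \<otimes> A'" using c r_cancel by (meson m_closed)
  have "(Xg \<otimes> A) \<otimes> (A' \<otimes> Yg) = (A \<otimes> A') \<otimes> (Xg \<otimes> Yg)"
  proof -
    have "(Xg \<otimes> A) \<otimes> (A' \<otimes> Yg) = A \<otimes> ((Xg \<otimes> A') \<otimes> Yg)" using c h1 by (simp add: m_assoc)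
    also have "\<dots> = (A \<otimes> A') \<otimes> (Xg \<otimes> Yg)" using c h2 by (simp add: m_assoc)
    finally show ?thesis .
  qed
  moreover have "(A' \<otimes> Yg) \<otimes> (Xg \<otimes> A) = (A \<otimes> A') \<otimes> (Yg \<otimes> Xg)"
  proof -
    have "(A' \<otimes> Yg) \<otimes> (Xg \<otimes> A) = A' \<otimes> (Yg \<otimes> (A \<otimes> Xg))" using c h1 by (simp add: m_assoc)
    also have "\<dots> = A' \<otimes> (A \<otimes> (Yg \<otimes> Xg))" using c h3 by (simp flip: m_assoc)
    also have "\<dots> = (A \<otimes> A') \<otimes> (Yg \<otimes> Xg)" using c aa by (simp flip: m_assoc)
    finally show ?thesis .
  qed
  ultimately show ?thesis using h6 c l_cancel by (metis m_closed)
qed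


lemma rep_line:
  fixes R :: "('g, 'b) monoid_scheme" (structure)
  assumes rep: "representation P L R r" and l: "{p, q, s} \<in> L"
  shows "r p \<otimes> r q = r s \<and> r q \<otimes> r p = r s \<and> r p \<in> carrier R \<and> r p \<otimes> r p = \<one>"
proof -
  have R: "group R" using rep unfolding representation_def by blast
  have K: "\<And>x y z. {x, y, z} \<in> L \<Longrightarrow> klein_four_subgroup R {\<one>, r x, r y, r z}"
    using rep unfolding representation_def by blast
  have l2: "{q, p, s} \<in> L" using l by (simp add: insert_commute)
  note a = klein_prod[OF R K[OF l]]
  have b: "r q \<otimes> r p = r s" using klein_prod[OF R K[OF l2]] by (rule conjunct1)
  show ?thesis
  proof (intro conjI)
    show "r p \<otimes> r q = r s" using a by (rule conjunct1)
    show "r q \<otimes> r p = r s" by (rule b)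
    show "r p \<in> carrier R" using a by (elim conjE)
    show "r p \<otimes> r p = \<one>" using a by (elim conjE)
  qed
qed

lemma gens_comm:
  fixes R :: "('g, 'b) monoid_scheme" (structure)
  assumes gq: "gen_quadrangle_2t P L t" and rep: "representation P L R r"
    and xP: "x \<in> P" and yP: "y \<in> P"
  shows "r x \<otimes> r y = r y \<otimes> r x"
proof -
  interpret gq2t P L t by (rule gq2t.intro[OF gq])
  have R: "group R" using rep unfolding representation_def by blast
  interpret group R by (rule R)
  have RL: "\<And>p q s. {p, q, s} \<in> L \<Longrightarrow> r p \<otimes> r q = r s \<and> r q \<otimes> r p = r s \<and> r p \<in> carrier R"
    using rep_line[OF rep] by blast
  have cr: "\<And>p. p \<in> P \<Longrightarrow> r p \<in> carrier R" using rep unfolding representation_def by blast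
  show ?thesis
  proof (cases "collinear_pts L x y")
    case True
    then obtain l where l: "l \<in> L" "x \<in> l" "y \<in> l" using col_E by blast
    show ?thesis
    proof (cases "x = y")
      case False
      then obtain s where "l = {x, y, s}" using third_pt[OF l(1) l(2) l(3)] by blast
      then show ?thesis using RL l(1) by metis
    qed simp
  next
    case False
    then obtain a a' b b' e e' z where g: "{x,a,b} \<in> L" "{x,a',b'} \<in> L" "{y,a,e} \<in> L"
      "{y,a',e'} \<in> L" "{b',e,z} \<in> L" "{b,e',z} \<in> L" using grid[OF xP yP] by blast
    have g2: "{a,y,e} \<in> L" "{a',y,e'} \<in> L" using g(3,4) by (simp_all add: insert_commute)
    show ?thesis
    proof (rule comm_key[OF R cr[OF xP] cr[OF yP]])
      show "r a \<in> carrier R" "r a' \<in> carrier R"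
        using RL[of a x b] RL[of a' x b'] g(1,2) by (simp_all add: insert_commute)
      show "r x \<otimes> r a = r a \<otimes> r x" using RL[OF g(1)] by simp
      show "r x \<otimes> r a' = r a' \<otimes> r x" using RL[OF g(2)] by simp
      show "r y \<otimes> r a = r a \<otimes> r y" using RL[OF g(3)] by simp
      show "r y \<otimes> r a' = r a' \<otimes> r y" using RL[OF g(4)] by simp
      show "r x \<otimes> r a' \<otimes> (r a \<otimes> r y) = r x \<otimes> r a \<otimes> (r a' \<otimes> r y)"
        using RL[OF g(1)] RL[OF g(2)] RL[OF g2(1)] RL[OF g2(2)] RL[OF g(5)] RL[OF g(6)] by simp
      show "r x \<otimes> r a \<otimes> (r a' \<otimes> r y) = r a' \<otimes> r y \<otimes> (r x \<otimes> r a)"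
        using RL[OF g(1)] RL[OF g2(2)] RL[OF g(6)] by simp
    qed
  qed
qed

lemma main_aux:
  fixes P :: "'p set" and L :: "'p set set" and t :: nat
    and R :: "('g, 'b) monoid_scheme" (structure) and r :: "'p \<Rightarrow> 'g"
  assumes "gen_quadrangle_2t P L t"
    and "representation P L R r"
  shows "elementary_abelian_2_group R"
proof -
  note gq = assms(1) and rep = assms(2)
  interpret gq2t P L t by (rule gq2t.intro[OF gq])
  have R: "group R" using rep unfolding representation_def by blast
  interpret group R by (rule R)
  have cr: "\<And>p. p \<in> P \<Longrightarrow> r p \<in> carrier R" using rep unfolding representation_def by blast
  have gen: "generate R (r ` P) = carrier R" using rep unfolding representation_def by blast
  have sq: "\<And>p. p \<in> P \<Longrightarrow> r p \<otimes> r p = \<one>"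
  proof -
    fix p assume pP: "p \<in> P"
    obtain l where l: "l \<in> L" "p \<in> l" using line_exists[OF pP] by blast
    have "card l = 3" using line_card[OF l(1)] .
    then have "card (l - {p}) = 2" using l(2) by (simp add: card_Diff_singleton)
    then have "l - {p} \<noteq> {}" by (metis card.empty zero_neq_numeral)
    then obtain a where "a \<in> l" "a \<noteq> p" by blast
    then obtain b where "l = {p, a, b}" using third_pt[OF l(1) l(2)] by metis
    then show "r p \<otimes> r p = \<one>" using rep_line[OF rep, of p a b] l(1) by simp
  qed
  have invr: "\<And>p. p \<in> P \<Longrightarrow> inv (r p) = r p" using sq cr inv_equality by blast
  have sub: "r ` P \<subseteq> carrier R" using cr by blast
  have A: "\<forall>p\<in>P. g \<otimes> r p = r p \<otimes> g" if "g \<in> generate R (r ` P)" for g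
    using that
  proof (induct g rule: generate.induct)
    case one then show ?case using cr by simp
  next
    case (incl h) then show ?case using gens_comm[OF gq rep] by blast
  next
    case (inv h) then show ?case using gens_comm[OF gq rep] invr by auto
  next
    case (eng h1 h2)
    have c: "h1 \<in> carrier R" "h2 \<in> carrier R" using eng(1,3) generate_in_carrier[OF sub] by auto
    show ?case
    proof
      fix p assume pP: "p \<in> P"
      have "h1 \<otimes> h2 \<otimes> r p = h1 \<otimes> (r p \<otimes> h2)" using eng(4) pP c cr by (simp add: m_assoc)
      also have "\<dots> = (h1 \<otimes> r p) \<otimes> h2" using c cr pP by (simp add: m_assoc)
      also have "\<dots> = r p \<otimes> (h1 \<otimes> h2)" using eng(2) pP c cr by (simp add: m_assoc)
      finally show "h1 \<otimes> h2 \<otimes> r p = r p \<otimes> (h1 \<otimes> h2)" .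
    qed
  qed
  have B: "\<forall>g\<in>generate R (r ` P). g \<otimes> h = h \<otimes> g" if "h \<in> generate R (r ` P)" for h
    using that
  proof (induct h rule: generate.induct)
    case one then show ?case using generate_in_carrier[OF sub] by simp
  next
    case (incl h) then show ?case using A by (metis imageE)
  next
    case (inv h) then show ?case using A invr by (metis imageE)
  next
    case (eng h1 h2)
    show ?case
    proof
      fix g assume g: "g \<in> generate R (r ` P)"
      have c: "h1 \<in> carrier R" "h2 \<in> carrier R" "g \<in> carrier R"
        using eng(1,3) g generate_in_carrier[OF sub] by auto
      have "g \<otimes> (h1 \<otimes> h2) = (g \<otimes> h1) \<otimes> h2" using c by (simp add: m_assoc)
      also have "\<dots> = (h1 \<otimes> g) \<otimes> h2" using eng(2) g by simp
      also have "\<dots> = h1 \<otimes> (h2 \<otimes> g)" using eng(4) g c by (simp add: m_assoc)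
      also have "\<dots> = (h1 \<otimes> h2) \<otimes> g" using c by (simp add: m_assoc)
      finally show "g \<otimes> (h1 \<otimes> h2) = (h1 \<otimes> h2) \<otimes> g" .
    qed
  qed
  have C: "g \<otimes> g = \<one>" if "g \<in> generate R (r ` P)" for g
    using that
  proof (induct g rule: generate.induct)
    case one then show ?case by simp
  next
    case (incl h) then show ?case using sq by blast
  next
    case (inv h) then show ?case using sq invr by auto
  next
    case (eng h1 h2)
    have c: "h1 \<in> carrier R" "h2 \<in> carrier R"
      using eng(1,3) generate_in_carrier[OF sub] by auto
    have "h1 \<otimes> h2 \<otimes> (h1 \<otimes> h2) = h1 \<otimes> (h2 \<otimes> h1) \<otimes> h2" using c by (simp add: m_assoc)
    also have "\<dots> = h1 \<otimes> (h1 \<otimes> h2) \<otimes> h2" using B[OF eng(1)] eng(3) by simp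
    also have "\<dots> = (h1 \<otimes> h1) \<otimes> (h2 \<otimes> h2)" using c by (simp add: m_assoc)
    finally show ?case using eng(2,4) by simp
  qed
  have "comm_group R"
    by (rule group_comm_groupI) (metis B gen)
  then show ?thesis unfolding elementary_abelian_2_group_def using C gen by blast
qed


theorem proposition3p1:
  fixes P :: "'p set" and L :: "'p set set" and t :: nat
    and R :: "('g, 'b) monoid_scheme" and r :: "'p \<Rightarrow> 'g"
  assumes "gen_quadrangle_2t P L t"
    and "representation P L R r"
  shows "elementary_abelian_2_group R"
  using assms by (rule main_aux)

end
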